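(* Let $\xi=(\xi_+,\xi_-)\in\mathcal{P}^2$ be minimal and let $n\in\mathbb{Z}\setminus\{0\}$. Then there exists a CSCA $\mathbf{a}$ with $\mathbf{a}\xi=u^n\xi$ (i.e. $\xi$ is a glider with eigenvalue $u^n$ for some CSCA) if and only if $\xi\wedge\bar\xi$ divides $u^{-n}+u^{n}$ in $\mathcal{P}$.
   Context: $\mathcal{P}$ denotes the ring of Laurent polynomials in $u$ over $\mathbb{Z}_2$; $\bar p(u)=p(u^{-1})$, applied entrywise to vectors. $\mathcal{R}$ is the subring of palindromes ($\bar p=p$). A CSCA is a $2\times2$ matrix with entries in $\mathcal{R}$ and determinant $1$. A vector $\xi\in\mathcal{P}^2$ is minimal if $\xi_+$ and $\xi_-$ have no common non-invertible divisor in $\mathcal{P}$ (the invertible elements of $\mathcal{P}$ are the monomials). The wedge product is $\xi\wedge\eta=\xi_+\eta_-+\eta_+\xi_-$. *)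

theory Defs
  imports "HOL-Computational_Algebra.Formal_Laurent_Series" "HOL-Library.Z2"
begin

text \<open>Laurent polynomials in u over Z_2, realised inside the formal Laurent series
  over the two-element field (type bit) as those with finite support.\<close>

definition LP :: "bit fls set" where
  "LP = {f. finite {n. fls_nth f n \<noteq> 0}}"

definition upow :: "int \<Rightarrow> bit fls" where
  "upow n = fls_X_intpow n"

text \<open>Bar involution p(u) to p(u^-1) (only meaningful on LP).\<close>
definition lbar :: "bit fls \<Rightarrow> bit fls" where
  "lbar f = Abs_fls (\<lambda>n. fls_nth f (- n))"

definition RP :: "bit fls set" where
  "RP = {p \<in> LP. lbar p = p}"

definition ldvd :: "bit fls \<Rightarrow> bit fls \<Rightarrow> bool" where
  "ldvd a b \<longleftrightarrow> (\<exists>q \<in> LP. b = a * q)"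

definition lunit :: "bit fls \<Rightarrow> bool" where
  "lunit a \<longleftrightarrow> (\<exists>e \<in> LP. a * e = 1)"

definition minimal :: "bit fls \<Rightarrow> bit fls \<Rightarrow> bool" where
  "minimal xp xm \<longleftrightarrow> xp \<in> LP \<and> xm \<in> LP \<and>
     (\<forall>d \<in> LP. ldvd d xp \<and> ldvd d xm \<longrightarrow> lunit d)"

text \<open>CSCA: the matrix ((a, b), (c, d)) with palindromic entries and determinant 1.\<close>
definition csca :: "bit fls \<Rightarrow> bit fls \<Rightarrow> bit fls \<Rightarrow> bit fls \<Rightarrow> bool" where
  "csca a b c d \<longleftrightarrow> a \<in> RP \<and> b \<in> RP \<and> c \<in> RP \<and> d \<in> RP \<and> a * d - b * c = 1"

definition wedge :: "bit fls \<times> bit fls \<Rightarrow> bit fls \<times> bit fls \<Rightarrow> bit fls" where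
  "wedge x y = fst x * snd y + fst y * snd x"

end

theory Submission imports Defs begin
notation fls_nth (infixl "$$" 75)

lemma bit_fls_neg: "- (x::bit fls) = x"
  by (rule fls_eqI) simp
lemma bit_add_self: "(b::bit) + b = 0"
  by (metis bit_2_eq_0 mult_2 mult_zero_left)
lemma bit_fls_add_self: "(x::bit fls) + x = 0"
  by (rule fls_eqI) (simp add: bit_add_self)
lemma bit_fls_add_self2: "(x::bit fls) + (x + y) = y"
  by (metis add.assoc add_0 bit_fls_add_self)
lemma bit_fls_diff: "(x::bit fls) - y = x + y"
  by (metis bit_fls_neg diff_conv_add_uminus)

lemmas c2 = algebra_simps bit_fls_add_self bit_fls_add_self2

definition Pp :: "bit poly \<Rightarrow> bit fls" where
  "Pp p = fps_to_fls (fps_of_poly p)"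

lemma Pp_nth: "Pp p $$ n = (if n < 0 then 0 else coeff p (nat n))"
  by (simp add: Pp_def)
lemma Pp_mult: "Pp (p * q) = Pp p * Pp q"
  by (simp add: Pp_def fps_of_poly_mult fls_times_fps_to_fls)
lemma Pp_add: "Pp (p + q) = Pp p + Pp q"
  by (simp add: Pp_def fps_of_poly_add)
lemma Pp_0[simp]: "Pp 0 = 0" by (simp add: Pp_def)
lemma Pp_1[simp]: "Pp 1 = 1" by (simp add: Pp_def)

lemma upow_mult: "upow k * f = fls_shift (-k) f"
  unfolding upow_def by (rule fls_X_intpow_times_conv_shift(1))
lemma upow_upow: "upow k * upow l = upow (k + l)"
  unfolding upow_def by (rule fls_X_intpow_times_fls_X_intpow)
lemma upow_0[simp]: "upow 0 = 1" unfolding upow_def by simp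
lemma upow_nth: "upow k $$ n = (if n = k then 1 else 0)"
  unfolding upow_def by simp

lemma LP_iff: "f \<in> LP \<longleftrightarrow> finite {n. f $$ n \<noteq> 0}" by (simp add: LP_def)

lemma LP_add: "f \<in> LP \<Longrightarrow> g \<in> LP \<Longrightarrow> f + g \<in> LP"
  unfolding LP_iff
  by (rule finite_subset[of _ "{n. f $$ n \<noteq> 0} \<union> {n. g $$ n \<noteq> 0}"]) auto
lemma LP_0[simp]: "0 \<in> LP" by (simp add: LP_iff)
lemma LP_upow[simp]: "upow k \<in> LP"
  unfolding LP_iff upow_nth by (rule finite_subset[of _ "{k}"]) auto
lemma LP_1[simp]: "1 \<in> LP" using LP_upow[of 0] by simp

lemma LP_bound: assumes "f \<in> LP" obtains M where "\<And>n. f $$ n \<noteq> 0 \<Longrightarrow> n \<le> M" "\<And>n. f $$ n \<noteq> 0 \<Longrightarrow> -M \<le> n"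
proof -
  let ?S = "{n. f $$ n \<noteq> 0}"
  have fin: "finite ?S" using assms LP_iff by auto
  define M where "M = Max (insert 0 (abs ` ?S))"
  have *: "\<And>n. n \<in> ?S \<Longrightarrow> \<bar>n\<bar> \<le> M" unfolding M_def using fin by (intro Max_ge) auto
  show ?thesis
  proof (rule that)
    fix n assume "f $$ n \<noteq> 0" then have "\<bar>n\<bar> \<le> M" using * by auto
    then show "n \<le> M" "-M \<le> n" by auto
  qed
qed

lemma lbar_nth: assumes "f \<in> LP" shows "lbar f $$ n = f $$ (- n)"
proof -
  obtain M where M: "\<And>n. f $$ n \<noteq> 0 \<Longrightarrow> n \<le> M" using LP_bound[OF assms] by blast
  have "\<exists>N. \<forall>n<N. f $$ (- n) = 0"
  proof (intro exI[of _ "-M"] allI impI)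
    fix n :: int assume "n < -M"
    then show "f $$ (- n) = 0" using M[of "-n"] by (cases "f $$ (-n) = 0") auto
  qed
  then show ?thesis unfolding lbar_def by (rule nth_Abs_fls_ex_lower_bound)
qed

lemma LP_lbar: "f \<in> LP \<Longrightarrow> lbar f \<in> LP"
  unfolding LP_iff[of "lbar f"]
  apply (simp add: lbar_nth)
  apply (rule finite_subset[of _ "uminus ` {n. f $$ n \<noteq> 0}"])
   apply (auto simp: LP_iff)
  by (metis (mono_tags, lifting) add.inverse_inverse image_eqI mem_Collect_eq)

lemma LP_rep_Pp: "upow k * Pp p \<in> LP"
  unfolding LP_iff
proof (rule finite_subset[of _ "{k..k + int (degree p)}"])
  show "{n. (upow k * Pp p) $$ n \<noteq> 0} \<subseteq> {k..k + int (degree p)}"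
  proof
    fix x assume "x \<in> {n. (upow k * Pp p) $$ n \<noteq> 0}"
    then have "\<not> x < k" "coeff p (nat (x - k)) \<noteq> 0"
      by (auto simp: upow_mult Pp_nth split: if_splits)
    moreover from this(2) have "nat (x - k) \<le> degree p" by (rule le_degree)
    ultimately show "x \<in> {k..k + int (degree p)}" by auto
  qed
qed simp

lemma LP_rep: assumes "f \<in> LP" obtains k p where "f = upow k * Pp p"
proof -
  obtain M where M: "\<And>n. f $$ n \<noteq> 0 \<Longrightarrow> -M \<le> n" using LP_bound[OF assms] by blast
  let ?S = "{n. f $$ n \<noteq> 0}"
  have fin: "finite ?S" using assms LP_iff by auto
  define k where "k = -M"
  define g where "g = (\<lambda>m::nat. f $$ (k + int m))"
  have "{m. g m \<noteq> 0} \<subseteq> (\<lambda>x. nat (x - k)) ` ?S"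
  proof
    fix m assume "m \<in> {m. g m \<noteq> 0}"
    then have "k + int m \<in> ?S" unfolding g_def by simp
    moreover have "m = nat ((k + int m) - k)" by simp
    ultimately show "m \<in> (\<lambda>x. nat (x - k)) ` ?S" by (rule rev_image_eqI)
  qed
  then have "finite {m. g m \<noteq> 0}" using fin by (meson finite_imageI finite_subset)
  then have cof: "\<forall>\<^sub>\<infinity>m. g m = 0" by (simp add: MOST_iff_finiteNeg)
  define p where "p = Abs_poly g"
  have cp: "coeff p m = g m" for m unfolding p_def using cof by (simp add: Abs_poly_inverse)
  have "f = upow k * Pp p"
  proof (rule fls_eqI)
    fix n
    show "f $$ n = (upow k * Pp p) $$ n"
      using M[of n] by (cases "f $$ n = 0") (auto simp: upow_mult Pp_nth cp g_def k_def)
  qed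
  then show ?thesis using that by blast
qed

lemma LP_mult: assumes "f \<in> LP" "g \<in> LP" shows "f * g \<in> LP"
proof -
  obtain k p where f: "f = upow k * Pp p" using LP_rep[OF assms(1)] by blast
  obtain l q where g: "g = upow l * Pp q" using LP_rep[OF assms(2)] by blast
  have "f * g = upow (k + l) * Pp (p * q)"
    unfolding f g Pp_mult upow_upow[symmetric] by (simp only: mult_ac)
  then show ?thesis using LP_rep_Pp by simp
qed

lemma lbar_add: "f \<in> LP \<Longrightarrow> g \<in> LP \<Longrightarrow> lbar (f + g) = lbar f + lbar g"
  by (rule fls_eqI) (simp add: lbar_nth LP_add)
lemma lbar_upow: "lbar (upow k) = upow (-k)"
  by (rule fls_eqI) (auto simp: lbar_nth upow_nth)
lemma lbar_0[simp]: "lbar 0 = 0"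
  by (rule fls_eqI) (simp add: lbar_nth)
lemma lbar_1[simp]: "lbar 1 = 1"
  using lbar_upow[of 0] by simp
lemma lbar_lbar: "f \<in> LP \<Longrightarrow> lbar (lbar f) = f"
  by (rule fls_eqI) (simp add: lbar_nth LP_lbar)

lemma lbar_rep: "lbar (upow k * Pp p) = upow (-k - int (degree p)) * Pp (reflect_poly p)"
proof (rule fls_eqI)
  fix n
  define d where "d = degree p"
  have L: "lbar (upow k * Pp p) $$ n = (if -n-k < 0 then 0 else coeff p (nat (-n-k)))"
    by (subst lbar_nth[OF LP_rep_Pp]) (simp add: upow_mult Pp_nth)
  have R: "(upow (-k - int (degree p)) * Pp (reflect_poly p)) $$ n =
     (if n + k + int d < 0 then 0 else if nat (n + k + int d) > d then 0 else coeff p (d - nat (n + k + int d)))"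
    proof -
    have idx: "n + - (-k - int d) = n + k + int d" by simp
    show ?thesis
      by (simp only: upow_mult fls_shift_nth Pp_nth coeff_reflect_poly d_def[symmetric] idx)
  qed
  show "lbar (upow k * Pp p) $$ n = (upow (-k - int (degree p)) * Pp (reflect_poly p)) $$ n"
    unfolding L R
  proof (cases "-n-k < 0")
    case True
    have h: "n + k + int d > int d" using True by linarith
    then have "\<not> n + k + int d < 0" by linarith
    moreover have "d < nat (n + k + int d)" using h by (simp add: zless_nat_eq_int_zless)
    ultimately show "(if -n-k < 0 then 0 else coeff p (nat (-n-k))) =
     (if n + k + int d < 0 then 0 else if nat (n + k + int d) > d then 0 else coeff p (d - nat (n + k + int d)))"
      using True by simp
  next
    case False
    obtain j where j: "-n-k = int j" using False zero_le_imp_eq_int by (metis not_less)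
    then have nj: "nat (-n-k) = j" by simp
    show "(if -n-k < 0 then 0 else coeff p (nat (-n-k))) =
     (if n + k + int d < 0 then 0 else if nat (n + k + int d) > d then 0 else coeff p (d - nat (n + k + int d)))"
    proof (cases "j > d")
      case True
      then have c0: "coeff p j = 0" unfolding d_def by (rule coeff_eq_0)
      have "int d < int j" using True by simp
      then have "n + k + int d < 0" using j by linarith
      then show ?thesis using False c0 nj by simp
    next
      case c2: False
      then have "int (d - j) = int d - int j" by (simp add: of_nat_diff)
      then have e: "n + k + int d = int (d - j)" using j by linarith
      then have e2: "nat (n + k + int d) = d - j" by simp
      have "d - (d - j) = j" using c2 by simp
      then show ?thesis using False c2 nj e e2 by (simp only: if_False not_less e2) simp
    qed
  qed
qed

lemma lbar_mult: assumes "f \<in> LP" "g \<in> LP" shows "lbar (f * g) = lbar f * lbar g"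
proof -
  obtain k p where f: "f = upow k * Pp p" using LP_rep[OF assms(1)] by blast
  obtain l q where g: "g = upow l * Pp q" using LP_rep[OF assms(2)] by blast
  show ?thesis
  proof (cases "p = 0 \<or> q = 0")
    case True then show ?thesis by (auto simp: f g)
  next
    case False
    have "f * g = upow (k + l) * Pp (p * q)"
      unfolding f g Pp_mult upow_upow[symmetric] by (simp only: mult_ac)
    then have "lbar (f * g) = upow (-(k+l) - int (degree (p * q))) * Pp (reflect_poly (p * q))"
      by (simp add: lbar_rep)
    also have "\<dots> = upow ((-k - int (degree p)) + (-l - int (degree q))) * (Pp (reflect_poly p) * Pp (reflect_poly q))"
    proof -
      have "int (degree (p * q)) = int (degree p) + int (degree q)" using False by (simp add: degree_mult_eq)
      then have "-(k+l) - int (degree (p * q)) = (-k - int (degree p)) + (-l - int (degree q))" by simp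
      then show ?thesis by (simp only: reflect_poly_mult Pp_mult)
    qed
    also have "\<dots> = lbar f * lbar g"
      unfolding f g lbar_rep upow_upow[symmetric] by (simp only: mult_ac)
    finally show ?thesis .
  qed
qed

lemma poly_bezout:
  fixes p r :: "'a::field poly"
  shows "\<exists>A B g. A * p + B * r = g \<and> g dvd p \<and> g dvd r"
proof (induction "if r = 0 then 0 else Suc (degree r)" arbitrary: p r rule: less_induct)
  case less
  show ?case
  proof (cases "r = 0")
    case True
    then show ?thesis by (intro exI[of _ 1] exI[of _ 0] exI[of _ p]) simp
  next
    case False
    have "(if p mod r = 0 then 0 else Suc (degree (p mod r))) < (if r = 0 then 0 else Suc (degree r))"
      using False degree_mod_less'[OF False, of p] by auto
    from less[OF this] obtain A B g where h: "A * r + B * (p mod r) = g" "g dvd r" "g dvd p mod r"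
      by blast
    have pm: "p mod r = p - (p div r) * r" by (simp add: minus_div_mult_eq_mod)
    have "g dvd p"
      using dvd_add[OF dvd_mult[OF h(2), of "p div r"] h(3)] by (simp only: div_mult_mod_eq)
    moreover have "B * p + (A - B * (p div r)) * r = g"
      using h(1) unfolding pm by (simp add: algebra_simps)
    ultimately show ?thesis using h(2) by blast
  qed
qed


lemma c2_swap: assumes "(V::bit fls) + U = T + S" shows "V + T = U + S"
proof -
  have "U + S = (V + U) + (V + S)" by (simp add: c2)
  also have "\<dots> = (T + S) + (V + S)" using assms by simp
  also have "\<dots> = V + T" by (simp add: c2)
  finally show ?thesis by simp
qed

lemma min_bezout: assumes "minimal xp xm" shows "\<exists>\<alpha>\<in>LP. \<exists>\<beta>\<in>LP. \<alpha> * xp + \<beta> * xm = 1"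
proof -
  have xp: "xp \<in> LP" and xm: "xm \<in> LP" and H: "\<And>d. d \<in> LP \<Longrightarrow> ldvd d xp \<Longrightarrow> ldvd d xm \<Longrightarrow> lunit d"
    using assms unfolding minimal_def by auto
  obtain k p where xpr: "xp = upow k * Pp p" using LP_rep[OF xp] by blast
  obtain l r where xmr: "xm = upow l * Pp r" using LP_rep[OF xm] by blast
  obtain A B g where g: "A * p + B * r = g" "g dvd p" "g dvd r" using poly_bezout[of p r] by blast
  obtain p1 where p1: "p = g * p1" using g(2) by (rule dvdE)
  obtain r1 where r1: "r = g * r1" using g(3) by (rule dvdE)
  have PgLP: "Pp g \<in> LP" using LP_rep_Pp[of 0 g] by simp
  have "ldvd (Pp g) xp" unfolding ldvd_def
    by (rule bexI[of _ "upow k * Pp p1"]) (simp_all add: xpr p1 Pp_mult LP_rep_Pp mult_ac)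
  moreover have "ldvd (Pp g) xm" unfolding ldvd_def
    by (rule bexI[of _ "upow l * Pp r1"]) (simp_all add: xmr r1 Pp_mult LP_rep_Pp mult_ac)
  ultimately have "lunit (Pp g)" using H PgLP by blast
  then obtain e where e: "e \<in> LP" "Pp g * e = 1" unfolding lunit_def by blast
  have uk: "upow (-k) * upow k = 1" "upow (-l) * upow l = 1" by (simp_all add: upow_upow)
  have "(Pp A * e * upow (-k)) * xp = (upow (-k) * upow k) * (e * (Pp A * Pp p))"
    unfolding xpr by (simp only: mult_ac)
  also have "\<dots> = e * (Pp A * Pp p)" using uk by simp
  finally have 1: "(Pp A * e * upow (-k)) * xp = e * (Pp A * Pp p)" .
  have "(Pp B * e * upow (-l)) * xm = (upow (-l) * upow l) * (e * (Pp B * Pp r))"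
    unfolding xmr by (simp only: mult_ac)
  also have "\<dots> = e * (Pp B * Pp r)" using uk by simp
  finally have 2: "(Pp B * e * upow (-l)) * xm = e * (Pp B * Pp r)" .
  have "(Pp A * e * upow (-k)) * xp + (Pp B * e * upow (-l)) * xm = e * Pp (A * p + B * r)"
    unfolding 1 2 Pp_add Pp_mult by (simp add: algebra_simps)
  also have "\<dots> = 1" using g(1) e(2) by (simp add: mult.commute)
  finally have "(Pp A * e * upow (-k)) * xp + (Pp B * e * upow (-l)) * xm = 1" .
  moreover have "Pp A * e * upow (-k) \<in> LP" "Pp B * e * upow (-l) \<in> LP"
    using LP_rep_Pp[of 0 A] LP_rep_Pp[of 0 B] e(1) by (simp_all add: LP_mult)
  ultimately show ?thesis by blast
qed

lemma s_nonzero: assumes "n \<noteq> 0" shows "upow (- n) + upow n \<noteq> 0"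
proof
  assume "upow (- n) + upow n = 0"
  then have "(upow (- n) + upow n) $$ n = 0" by simp
  then show False using assms by (simp add: upow_nth)
qed

theorem mainTheorem2:
  fixes xp xm :: "bit fls" and n :: int
  assumes "minimal xp xm" and "n \<noteq> 0"
  shows "(\<exists>a b c d. csca a b c d \<and>
            a * xp + b * xm = upow n * xp \<and> c * xp + d * xm = upow n * xm)
         \<longleftrightarrow> ldvd (wedge (xp, xm) (lbar xp, lbar xm)) (upow (- n) + upow n)"
proof -
  have xp: "xp \<in> LP" and xm: "xm \<in> LP" using assms(1) unfolding minimal_def by auto
  define U where "U = upow n"
  define V where "V = upow (- n)"
  define X' where "X' = lbar xp"
  define Y' where "Y' = lbar xm"
  define w where "w = xp * Y' + X' * xm"
  define s where "s = V + U"
  have X'LP: "X' \<in> LP" and Y'LP: "Y' \<in> LP" using xp xm by (simp_all add: X'_def Y'_def LP_lbar)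
  have ULP: "U \<in> LP" "V \<in> LP" by (simp_all add: U_def V_def)
  have UV: "U * V = 1" by (simp add: U_def V_def upow_upow)
  have wdef: "wedge (xp, xm) (lbar xp, lbar xm) = w" by (simp add: wedge_def w_def X'_def Y'_def)
  have sdef: "upow (- n) + upow n = s" by (simp add: s_def U_def V_def)
  show ?thesis unfolding wdef sdef
  proof
    assume "\<exists>a b c d. csca a b c d \<and> a * xp + b * xm = upow n * xp \<and> c * xp + d * xm = upow n * xm"
    then obtain a b c d where cs: "csca a b c d" and e1: "a * xp + b * xm = U * xp"
      and e2: "c * xp + d * xm = U * xm" unfolding U_def by blast
    have aLP: "a \<in> LP" "b \<in> LP" "c \<in> LP" "d \<in> LP" using cs by (auto simp: csca_def RP_def)
    have ab: "lbar a = a" "lbar b = b" "lbar c = c" "lbar d = d" using cs by (auto simp: csca_def RP_def)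
    obtain \<alpha> \<beta> where ab_LP: "\<alpha> \<in> LP" "\<beta> \<in> LP" and bz: "\<alpha> * xp + \<beta> * xm = 1"
      using min_bezout[OF assms(1)] by blast
    have "(a + U) * xp = a * xp + U * xp" by (simp add: distrib_right)
    also have "\<dots> = a * xp + (a * xp + b * xm)" using e1 by simp
    also have "\<dots> = b * xm" by (rule bit_fls_add_self2)
    finally have h1: "(a + U) * xp = b * xm" .
    have "(d + U) * xm = d * xm + U * xm" by (simp add: distrib_right)
    also have "\<dots> = d * xm + (c * xp + d * xm)" using e2 by simp
    also have "\<dots> = c * xp" by (simp add: c2)
    finally have h2: "c * xp = (d + U) * xm" by simp
    define k where "k = \<alpha> * b + \<beta> * (a + U)"
    define m where "m = \<alpha> * (d + U) + \<beta> * c"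
    have hk1: "a + U = k * xm" using h1 bz unfolding k_def by algebra
    have hk2: "b = k * xp" using h1 bz unfolding k_def by algebra
    have hm1: "c = m * xm" using h2 bz unfolding m_def by algebra
    have hm2: "d + U = m * xp" using h2 bz unfolding m_def by algebra
    have "lbar (a * xp + b * xm) = lbar (U * xp)" using e1 by simp
    then have e1': "a * X' + b * Y' = V * X'"
      using aLP xp xm ab by (simp add: lbar_add lbar_mult LP_mult U_def V_def lbar_upow X'_def Y'_def)
    have "lbar (c * xp + d * xm) = lbar (U * xm)" using e2 by simp
    then have e2': "c * X' + d * Y' = V * Y'"
      using aLP xp xm ab by (simp add: lbar_add lbar_mult LP_mult U_def V_def lbar_upow X'_def Y'_def)
    have kw: "k * w = s * X'" using hk1 hk2 e1' unfolding w_def s_def by algebra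
    have mw: "m * w = s * Y'" using hm1 hm2 e2' unfolding w_def s_def by algebra
    have "lbar (\<alpha> * xp + \<beta> * xm) = 1" using bz by simp
    then have bz': "lbar \<alpha> * X' + lbar \<beta> * Y' = 1"
      using ab_LP xp xm by (simp add: lbar_add lbar_mult LP_mult X'_def Y'_def)
    have "s = w * (lbar \<alpha> * k + lbar \<beta> * m)" using kw mw bz' by algebra
    moreover have "lbar \<alpha> * k + lbar \<beta> * m \<in> LP"
      using ab_LP aLP ULP xp xm unfolding k_def m_def by (simp add: LP_add LP_mult LP_lbar)
    ultimately show "ldvd w s" unfolding ldvd_def by blast
  next
    assume "ldvd w s"
    then obtain q where qLP: "q \<in> LP" and sq: "s = w * q" unfolding ldvd_def by blast
    have s0: "s \<noteq> 0" using s_nonzero[OF assms(2)] by (simp add: s_def U_def V_def)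
    then have w0: "w \<noteq> 0" using sq by auto
    have wLP: "w \<in> LP" using xp xm X'LP Y'LP by (simp add: w_def LP_add LP_mult)
    have lw: "lbar w = w" using xp xm X'LP Y'LP
      by (simp add: w_def lbar_add lbar_mult LP_mult X'_def Y'_def lbar_lbar add.commute mult.commute)
    have ls: "lbar s = s" by (simp add: s_def U_def V_def lbar_add lbar_upow add.commute)
    have "w * lbar q = lbar s" using sq wLP qLP lw by (simp add: lbar_mult)
    also have "\<dots> = w * q" using ls sq by simp
    finally have lq: "lbar q = q" using w0 by simp
    have lX: "lbar X' = xp" "lbar Y' = xm" "lbar xp = X'" "lbar xm = Y'"
      using xp xm by (simp_all add: X'_def Y'_def lbar_lbar)
    define a where "a = U + q * X' * xm"
    define b where "b = q * X' * xp"
    define c where "c = q * Y' * xm"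
    define d where "d = U + q * Y' * xp"
    have LPs: "a \<in> LP" "b \<in> LP" "c \<in> LP" "d \<in> LP"
      using xp xm X'LP Y'LP qLP ULP unfolding a_def b_def c_def d_def by (simp_all add: LP_add LP_mult)
    have sT: "V + U = q * xp * Y' + q * X' * xm" using sq unfolding s_def w_def by (simp add: algebra_simps)
    have "lbar a = V + q * xp * Y'"
      using xp xm X'LP Y'LP qLP ULP lq lX
      by (simp add: a_def U_def V_def lbar_add lbar_mult LP_mult lbar_upow)
    also have "\<dots> = a" unfolding a_def by (rule c2_swap[OF sT])
    finally have la: "lbar a = a" .
    have sT': "V + U = q * xm * X' + q * Y' * xp" using sq unfolding s_def w_def by (simp add: algebra_simps)
    have "lbar d = V + q * xm * X'"
      using xp xm X'LP Y'LP qLP ULP lq lX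
      by (simp add: d_def U_def V_def lbar_add lbar_mult LP_mult lbar_upow)
    also have "\<dots> = d" unfolding d_def by (rule c2_swap[OF sT'])
    finally have ld: "lbar d = d" .
    have lb: "lbar b = b"
      using xp xm X'LP Y'LP qLP lq lX by (simp add: b_def lbar_mult LP_mult mult_ac)
    have lc: "lbar c = c"
      using xp xm X'LP Y'LP qLP lq lX by (simp add: c_def lbar_mult LP_mult mult_ac)
    have "a * d - b * c = (U * U + U * U) + U * V"
      using sq unfolding a_def b_def c_def d_def s_def w_def by algebra
    then have det: "a * d - b * c = 1" using UV by (simp add: bit_fls_add_self)
    have "a * xp + b * xm = U * xp + (q * X' * xp * xm + q * X' * xp * xm)"
      unfolding a_def b_def by algebra
    then have q1: "a * xp + b * xm = U * xp" by (simp add: bit_fls_add_self)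
    have "c * xp + d * xm = U * xm + (q * Y' * xp * xm + q * Y' * xp * xm)"
      unfolding c_def d_def by algebra
    then have q2: "c * xp + d * xm = U * xm" by (simp add: bit_fls_add_self)
    have "csca a b c d" unfolding csca_def RP_def using LPs la lb lc ld det by simp
    then show "\<exists>a b c d. csca a b c d \<and> a * xp + b * xm = upow n * xp \<and> c * xp + d * xm = upow n * xm"
      using q1 q2 unfolding U_def by blast
  qed
qed

end
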